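(* Let $p$ be a prime, $0<\alpha\le 1$, and let $S\subseteq\mathbb{Z}_p$ be such that for any distinct $x_1,x_2,y_1,y_2,z_1,z_2\in S$, $$\det\begin{pmatrix}x_1-y_1 & x_2-y_2\\ y_1-z_1 & y_2-z_2\end{pmatrix}\neq 0 \quad\text{in } \mathbb{Z}_p.$$ Then $$\mathcal{C}^{\mathrm{bsgs}}_\alpha(S)>(\alpha|S|/\sqrt3)^{2/3}.$$
   Context: For $L\subseteq\mathbb{Z}_p^2$ and $C\subseteq\mathbb{Z}_p$, $I(L,C)=\{x\in\mathbb{Z}_p\mid \exists (a,b)\in L,\ c\in C \text{ with } a\neq0 \text{ and } ax+b=c\}$. The baby-step giant-step $\alpha$-complexity $\mathcal{C}^{\mathrm{bsgs}}_\alpha(S)$ of $S\subseteq\mathbb{Z}_p$ is the smallest integer $m$ such that there exist $L\subseteq\mathbb{Z}_p^2$ and $C\subseteq\mathbb{Z}_p$ with $|L|=|C|=m$ and $|I(L,C)\cap S|\geq\alpha|S|$. *)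

theory Defs
  imports Complex_Main "HOL-Computational_Algebra.Primes"
begin

text \<open>Z_p is represented by the residues {0..<p} of int; arithmetic is taken mod p.\<close>

definition Zp :: "int \<Rightarrow> int set" where
  "Zp p = {0..<p}"

definition I_set :: "int \<Rightarrow> (int \<times> int) set \<Rightarrow> int set \<Rightarrow> int set" where
  "I_set p L C = {x \<in> Zp p. \<exists>a b c. (a, b) \<in> L \<and> c \<in> C \<and> a mod p \<noteq> 0 \<and>
                                  (a * x + b) mod p = c mod p}"

definition bsgs_complexity :: "int \<Rightarrow> real \<Rightarrow> int set \<Rightarrow> nat" where
  "bsgs_complexity p \<alpha> S = (LEAST m. \<exists>L C. L \<subseteq> Zp p \<times> Zp p \<and> C \<subseteq> Zp p \<and>
       card L = m \<and> card C = m \<and> real (card (I_set p L C \<inter> S)) \<ge> \<alpha> * real (card S))"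

end

theory Submission
  imports Defs
begin

lemma modeq_dvd: "(u::int) mod p = v mod p \<Longrightarrow> p dvd u - v"
  by (simp add: mod_eq_dvd_iff)

lemma key_det:
  fixes p a b a' b' x1 x2 x3 y1 y2 y3 c1 c2 c3 :: int
  assumes p: "prime p" and a: "a mod p \<noteq> 0" and a': "a' mod p \<noteq> 0"
    and h1: "(a*x1+b) mod p = c1 mod p" and h2: "(a*x2+b) mod p = c2 mod p"
    and h3: "(a*x3+b) mod p = c3 mod p"
    and k1: "(a'*y1+b') mod p = c1 mod p" and k2: "(a'*y2+b') mod p = c2 mod p"
    and k3: "(a'*y3+b') mod p = c3 mod p"
  shows "((x1 - x2) * (y2 - y3) - (y1 - y2) * (x2 - x3)) mod p = 0"
proof -
  define u1 where "u1 = a*(x1-x2) - (c1-c2)"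
  define u2 where "u2 = a*(x2-x3) - (c2-c3)"
  define v1 where "v1 = a'*(y1-y2) - (c1-c2)"
  define v2 where "v2 = a'*(y2-y3) - (c2-c3)"
  have d1: "p dvd u1"
  proof -
    have "p dvd ((a*x1+b) - c1) - ((a*x2+b) - c2)"
      using modeq_dvd[OF h1] modeq_dvd[OF h2] by (rule dvd_diff)
    moreover have "((a*x1+b) - c1) - ((a*x2+b) - c2) = u1" unfolding u1_def by algebra
    ultimately show ?thesis by simp
  qed
  have d2: "p dvd u2"
  proof -
    have "p dvd ((a*x2+b) - c2) - ((a*x3+b) - c3)"
      using modeq_dvd[OF h2] modeq_dvd[OF h3] by (rule dvd_diff)
    moreover have "((a*x2+b) - c2) - ((a*x3+b) - c3) = u2" unfolding u2_def by algebra
    ultimately show ?thesis by simp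
  qed
  have e1: "p dvd v1"
  proof -
    have "p dvd ((a'*y1+b') - c1) - ((a'*y2+b') - c2)"
      using modeq_dvd[OF k1] modeq_dvd[OF k2] by (rule dvd_diff)
    moreover have "((a'*y1+b') - c1) - ((a'*y2+b') - c2) = v1" unfolding v1_def by algebra
    ultimately show ?thesis by simp
  qed
  have e2: "p dvd v2"
  proof -
    have "p dvd ((a'*y2+b') - c2) - ((a'*y3+b') - c3)"
      using modeq_dvd[OF k2] modeq_dvd[OF k3] by (rule dvd_diff)
    moreover have "((a'*y2+b') - c2) - ((a'*y3+b') - c3) = v2" unfolding v2_def by algebra
    ultimately show ?thesis by simp
  qed
  let ?D = "(x1 - x2) * (y2 - y3) - (y1 - y2) * (x2 - x3)"
  have eq: "a * a' * ?D = (c1-c2)*v2 + u1*(c2-c3) + u1*v2 - (c1-c2)*u2 - v1*(c2-c3) - v1*u2"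
    unfolding u1_def u2_def v1_def v2_def by algebra
  have "p dvd a * a' * ?D" unfolding eq using d1 d2 e1 e2 by auto
  moreover have "\<not> p dvd a" "\<not> p dvd a'" using a a' by (auto simp: dvd_eq_mod_eq_0)
  ultimately have "p dvd ?D" using p by (simp add: prime_dvd_mult_iff)
  then show ?thesis by (simp add: dvd_eq_mod_eq_0)
qed

lemma aff_inj:
  fixes p a b x y :: int
  assumes p: "prime p" and a: "a mod p \<noteq> 0" and x: "x \<in> Zp p" and y: "y \<in> Zp p"
    and h: "(a*x+b) mod p = (a*y+b) mod p"
  shows "x = y"
proof -
  have "p dvd (a*x+b) - (a*y+b)" using modeq_dvd[OF h] .
  then have "p dvd a * (x - y)" by (simp add: algebra_simps)
  moreover have "\<not> p dvd a" using a by (auto simp: dvd_eq_mod_eq_0)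
  ultimately have "p dvd x - y" using p by (simp add: prime_dvd_mult_iff)
  then have "x mod p = y mod p" by (simp add: mod_eq_dvd_iff)
  then show ?thesis using x y by (simp add: Zp_def)
qed

lemma count_bound:
  fixes P :: "('a \<times> 'b) set" and L :: "'a set" and C :: "'b set"
  assumes fL: "finite L" and fC: "finite C" and PLC: "P \<subseteq> L \<times> C"
    and cL: "card L = m" and cC: "card C = m" and Pne: "P \<noteq> {}"
    and two: "\<And>l l'. l \<in> L \<Longrightarrow> l' \<in> L \<Longrightarrow> l \<noteq> l' \<Longrightarrow>
               card {c\<in>C. (l,c)\<in>P \<and> (l',c)\<in>P} \<le> 2"
  shows "real (card P) ^ 2 < 3 * real m ^ 3"
proof -
  define \<chi> where "\<chi> l c = (if (l,c) \<in> P then 1 else 0 :: real)" for l c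
  define e where "e c = (\<Sum>l\<in>L. \<chi> l c)" for c
  define K where "K = real (card P)"
  have mpos: "m \<ge> 1"
  proof -
    obtain q where "q \<in> P" using Pne by auto
    then have "fst q \<in> L" using PLC by auto
    then have "L \<noteq> {}" by auto
    then have "card L > 0" using fL by (simp add: card_gt_0_iff)
    then show ?thesis using cL by simp
  qed
  have K1: "K = (\<Sum>c\<in>C. e c)"
  proof -
    have "K = (\<Sum>q\<in>L\<times>C. if q \<in> P then 1 else 0)"
    proof -
      have "(\<Sum>q\<in>L\<times>C. if q \<in> P then 1 else (0::real)) = (\<Sum>q\<in>{q\<in>L\<times>C. q\<in>P}. 1)"
        using sum.inter_filter[of "L\<times>C" "\<lambda>_. 1::real" "\<lambda>q. q\<in>P"] fL fC by simp
      also have "{q\<in>L\<times>C. q\<in>P} = P" using PLC by auto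
      finally show ?thesis by (simp add: K_def)
    qed
    also have "\<dots> = (\<Sum>l\<in>L. \<Sum>c\<in>C. \<chi> l c)"
      by (simp add: sum.cartesian_product \<chi>_def)
    also have "\<dots> = (\<Sum>c\<in>C. e c)" unfolding e_def by (rule sum.swap)
    finally show ?thesis .
  qed
  have Kle: "K \<le> real m ^ 2"
  proof -
    have "(\<Sum>c\<in>C. e c) \<le> (\<Sum>c\<in>C. real m)"
    proof (rule sum_mono)
      fix c assume "c \<in> C"
      have "e c \<le> (\<Sum>l\<in>L. 1)" unfolding e_def by (rule sum_mono) (simp add: \<chi>_def)
      then show "e c \<le> real m" using cL by simp
    qed
    then show ?thesis using K1 cC by (simp add: power2_eq_square)
  qed
  have sq: "(\<Sum>c\<in>C. e c ^ 2) = (\<Sum>l\<in>L. \<Sum>l'\<in>L. \<Sum>c\<in>C. \<chi> l c * \<chi> l' c)"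
  proof -
    have "(\<Sum>c\<in>C. e c ^ 2) = (\<Sum>c\<in>C. \<Sum>l\<in>L. \<Sum>l'\<in>L. \<chi> l c * \<chi> l' c)"
      unfolding e_def power2_eq_square by (simp add: sum_product)
    also have "\<dots> = (\<Sum>l\<in>L. \<Sum>c\<in>C. \<Sum>l'\<in>L. \<chi> l c * \<chi> l' c)" by (rule sum.swap)
    also have "\<dots> = (\<Sum>l\<in>L. \<Sum>l'\<in>L. \<Sum>c\<in>C. \<chi> l c * \<chi> l' c)"
      by (rule sum.cong[OF refl], rule sum.swap)
    finally show ?thesis .
  qed
  have row: "(\<Sum>l'\<in>L. \<Sum>c\<in>C. \<chi> l c * \<chi> l' c) \<le> (\<Sum>c\<in>C. \<chi> l c) + 2 * (real m - 1)"
    if lL: "l \<in> L" for l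
  proof -
    have "(\<Sum>l'\<in>L. \<Sum>c\<in>C. \<chi> l c * \<chi> l' c) =
          (\<Sum>c\<in>C. \<chi> l c * \<chi> l c) + (\<Sum>l'\<in>L-{l}. \<Sum>c\<in>C. \<chi> l c * \<chi> l' c)"
      using lL fL by (simp add: sum.remove)
    also have "(\<Sum>c\<in>C. \<chi> l c * \<chi> l c) = (\<Sum>c\<in>C. \<chi> l c)" by (rule sum.cong) (auto simp: \<chi>_def)
    also have "(\<Sum>l'\<in>L-{l}. \<Sum>c\<in>C. \<chi> l c * \<chi> l' c) \<le> (\<Sum>l'\<in>L-{l}. 2)"
    proof (rule sum_mono)
      fix l' assume l': "l' \<in> L - {l}"
      have "(\<Sum>c\<in>C. \<chi> l c * \<chi> l' c) = (\<Sum>c\<in>C. if (l,c)\<in>P \<and> (l',c)\<in>P then 1 else 0)"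
        by (rule sum.cong) (auto simp: \<chi>_def)
      also have "\<dots> = (\<Sum>c\<in>{c\<in>C. (l,c)\<in>P \<and> (l',c)\<in>P}. 1)"
        using sum.inter_filter[of C "\<lambda>_. 1::real" "\<lambda>c. (l,c)\<in>P \<and> (l',c)\<in>P"] fC by simp
      also have "\<dots> = real (card {c\<in>C. (l,c)\<in>P \<and> (l',c)\<in>P})" by simp
      also have "\<dots> \<le> 2" using two[of l l'] lL l' by fastforce
      finally show "(\<Sum>c\<in>C. \<chi> l c * \<chi> l' c) \<le> 2" .
    qed
    also have "(\<Sum>l'\<in>L-{l}. (2::real)) = 2 * (real m - 1)"
      using lL fL cL mpos by (simp add: card_Diff_singleton of_nat_diff)
    finally show ?thesis by simp
  qed
  have S2: "(\<Sum>c\<in>C. e c ^ 2) \<le> K + 2 * real m * (real m - 1)"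
  proof -
    have "(\<Sum>c\<in>C. e c ^ 2) \<le> (\<Sum>l\<in>L. (\<Sum>c\<in>C. \<chi> l c) + 2 * (real m - 1))"
      unfolding sq by (rule sum_mono) (rule row)
    also have "\<dots> = (\<Sum>l\<in>L. \<Sum>c\<in>C. \<chi> l c) + real m * (2 * (real m - 1))"
      using cL by (simp add: sum.distrib)
    also have "(\<Sum>l\<in>L. \<Sum>c\<in>C. \<chi> l c) = K" using K1 unfolding e_def by (simp add: sum.swap[of _ C])
    finally show ?thesis by (simp add: algebra_simps)
  qed
  have CS: "K ^ 2 \<le> real m * (\<Sum>c\<in>C. e c ^ 2)"
  proof -
    have "0 \<le> (\<Sum>c\<in>C. (real m * e c - K) ^ 2)" by (rule sum_nonneg) simp
    also have "\<dots> = (\<Sum>c\<in>C. real m ^ 2 * e c ^ 2 - 2 * real m * K * e c + K ^ 2)"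
      by (rule sum.cong) (auto simp: power2_eq_square algebra_simps)
    also have "\<dots> = real m ^ 2 * (\<Sum>c\<in>C. e c ^ 2) - 2 * real m * K * (\<Sum>c\<in>C. e c) + real m * K ^ 2"
      using cC by (simp add: sum.distrib sum_subtractf sum_distrib_left)
    also have "\<dots> = real m * (real m * (\<Sum>c\<in>C. e c ^ 2) - K ^ 2)"
      using K1 by (simp add: power2_eq_square algebra_simps)
    finally have "0 \<le> real m * (\<Sum>c\<in>C. e c ^ 2) - K ^ 2"
      using mpos by (simp add: zero_le_mult_iff)
    then show ?thesis by simp
  qed
  have "K ^ 2 \<le> real m * K + 2 * real m ^ 2 * (real m - 1)"
  proof -
    have "K ^ 2 \<le> real m * (K + 2 * real m * (real m - 1))"
      using CS S2 mpos by (meson order_trans mult_left_mono of_nat_0_le_iff)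
    then show ?thesis by (simp add: algebra_simps power2_eq_square)
  qed
  moreover have "real m * K \<le> real m * real m ^ 2" using Kle by (simp add: mult_left_mono)
  moreover have "real m \<ge> 1" using mpos by simp
  moreover have "2 * real m ^ 2 * (real m - 1) = 2 * real m ^ 3 - 2 * real m ^ 2"
    by (simp add: power2_eq_square power3_eq_cube algebra_simps)
  moreover have "real m * real m ^ 2 = real m ^ 3" by (simp add: power2_eq_square power3_eq_cube)
  moreover have "real m ^ 2 > 0" using mpos by simp
  ultimately have "K ^ 2 < 3 * real m ^ 3" by linarith
  then show ?thesis by (simp add: K_def)
qed


lemma three_elems:
  assumes "3 \<le> card A"
  shows "\<exists>a b c. a \<in> A \<and> b \<in> A \<and> c \<in> A \<and> a \<noteq> b \<and> a \<noteq> c \<and> b \<noteq> c"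
  using assms by (auto simp: numeral_eq_Suc card_le_Suc_iff)

lemma final_real:
  fixes N K m :: real
  assumes "0 < N" "N \<le> K" "K ^ 2 < 3 * m ^ 3" "0 \<le> m"
  shows "(N / sqrt 3) powr (2/3) < m"
proof -
  have mpos: "m > 0"
  proof (rule ccontr)
    assume "\<not> m > 0" then have "m = 0" using assms by simp
    then have "K ^ 2 < 0" using assms by simp
    then show False by (smt (verit) zero_le_power2)
  qed
  have "(K / sqrt 3) ^ 2 = K ^ 2 / 3" by (simp add: power_divide)
  also have "\<dots> < m ^ 3" using assms by simp
  also have "m ^ 3 = (m powr (3/2)) ^ 2"
  proof -
    have "(m powr (3/2)) ^ 2 = m powr (real 2 * (3/2))" using mpos by (simp add: powr_power)
    also have "\<dots> = m powr (real 3)" by simp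
    also have "\<dots> = m ^ 3" using mpos by (rule powr_realpow)
    finally show ?thesis by simp
  qed
  finally have lt: "K / sqrt 3 < m powr (3/2)"
    by (rule power_less_imp_less_base) simp
  have "(N / sqrt 3) powr (2/3) \<le> (K / sqrt 3) powr (2/3)"
    using assms by (intro powr_mono2 divide_right_mono) auto
  also have "\<dots> < (m powr (3/2)) powr (2/3)"
    using lt assms by (intro powr_less_mono2) auto
  also have "\<dots> = m" using mpos by (simp add: powr_powr)
  finally show ?thesis .
qed

theorem theorem8:
  fixes p :: int and \<alpha> :: real and S :: "int set"
  assumes "prime p"
    and "0 < \<alpha>" and "\<alpha> \<le> 1"
    and "S \<subseteq> Zp p" and "S \<noteq> {}"
    and "\<And>x1 x2 y1 y2 z1 z2. distinct [x1, x2, y1, y2, z1, z2] \<Longrightarrow>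
           {x1, x2, y1, y2, z1, z2} \<subseteq> S \<Longrightarrow>
           ((x1 - y1) * (y2 - z2) - (x2 - y2) * (y1 - z1)) mod p \<noteq> 0"
  shows "real (bsgs_complexity p \<alpha> S) > (\<alpha> * real (card S) / sqrt 3) powr (2/3)"
proof -
  note pr = assms(1) and Ssub = assms(4) and det = assms(6)
  have finZ: "finite (Zp p)" by (simp add: Zp_def)
  have p1: "p > 1" using pr prime_gt_1_int by blast
  have finS: "finite S" using Ssub finZ finite_subset by blast
  have cS: "card S > 0" using finS assms(5) by (simp add: card_gt_0_iff)
  define Q where "Q m \<longleftrightarrow> (\<exists>L C. L \<subseteq> Zp p \<times> Zp p \<and> C \<subseteq> Zp p \<and>
       card L = m \<and> card C = m \<and> real (card (I_set p L C \<inter> S)) \<ge> \<alpha> * real (card S))" for m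
  have Qp: "Q (nat p)"
  proof -
    have one: "1 \<in> Zp p" using p1 by (simp add: Zp_def)
    have "S \<subseteq> I_set p ({1} \<times> Zp p) (Zp p)"
    proof
      fix x assume xS: "x \<in> S"
      then have xZ: "x \<in> Zp p" using Ssub by auto
      have "0 \<in> Zp p" using p1 by (simp add: Zp_def)
      moreover have "(1::int) mod p \<noteq> 0" using p1 by simp
      ultimately show "x \<in> I_set p ({1} \<times> Zp p) (Zp p)"
        unfolding I_set_def using xZ by (intro CollectI conjI exI[of _ 1] exI[of _ 0] exI[of _ x]) auto
    qed
    then have "I_set p ({1} \<times> Zp p) (Zp p) \<inter> S = S" by auto
    moreover have "\<alpha> * real (card S) \<le> real (card S)" using assms(3) mult_right_mono[of \<alpha> 1 "real (card S)"] by simp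
    moreover have "card ({1::int} \<times> Zp p) = nat p" by (simp add: card_cartesian_product Zp_def)
    moreover have "card (Zp p) = nat p" by (simp add: Zp_def)
    ultimately show ?thesis unfolding Q_def using one
      by (intro exI[of _ "{1} \<times> Zp p"] exI[of _ "Zp p"]) auto
  qed
  have bdef: "bsgs_complexity p \<alpha> S = (LEAST m. Q m)" unfolding bsgs_complexity_def Q_def by simp
  have "Q (bsgs_complexity p \<alpha> S)" unfolding bdef by (rule LeastI[of Q, OF Qp])
  then obtain L C where LZ: "L \<subseteq> Zp p \<times> Zp p" and CZ: "C \<subseteq> Zp p"
    and cL: "card L = bsgs_complexity p \<alpha> S" and cC: "card C = bsgs_complexity p \<alpha> S"
    and big: "real (card (I_set p L C \<inter> S)) \<ge> \<alpha> * real (card S)"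
    unfolding Q_def by blast
  define m where "m = bsgs_complexity p \<alpha> S"
  define X where "X = I_set p L C \<inter> S"
  have fL: "finite L" using LZ finZ by (meson finite_SigmaI finite_subset)
  have fC: "finite C" using CZ finZ finite_subset by blast
  have XS: "X \<subseteq> S" unfolding X_def by auto
  have "\<forall>x\<in>X. \<exists>q. fst q \<in> L \<and> snd q \<in> C \<and> fst (fst q) mod p \<noteq> 0 \<and>
          (fst (fst q) * x + snd (fst q)) mod p = snd q mod p"
  proof
    fix x assume "x \<in> X"
    then obtain a b c where "(a, b) \<in> L" "c \<in> C" "a mod p \<noteq> 0" "(a * x + b) mod p = c mod p"
      unfolding X_def I_set_def by blast
    then show "\<exists>q. fst q \<in> L \<and> snd q \<in> C \<and> fst (fst q) mod p \<noteq> 0 \<and>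
          (fst (fst q) * x + snd (fst q)) mod p = snd q mod p"
      by (intro exI[of _ "((a,b),c)"]) auto
  qed
  from bchoice[OF this] obtain G where G0: "\<forall>x\<in>X. fst (G x) \<in> L \<and> snd (G x) \<in> C \<and> fst (fst (G x)) mod p \<noteq> 0 \<and>
          (fst (fst (G x)) * x + snd (fst (G x))) mod p = snd (G x) mod p"
    by (elim exE)
  have G: "fst (G x) \<in> L \<and> snd (G x) \<in> C \<and> fst (fst (G x)) mod p \<noteq> 0 \<and>
          (fst (fst (G x)) * x + snd (fst (G x))) mod p = snd (G x) mod p" if "x \<in> X" for x
    using G0 that by (rule bspec)
  have Gspec: "a mod p \<noteq> 0 \<and> (a * x + b) mod p = c mod p \<and> (a,b) \<in> L \<and> c \<in> C"
    if "x \<in> X" "G x = ((a,b),c)" for x a b c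
    using G[OF that(1)] that(2) by simp
  have injG: "inj_on G X"
  proof (rule inj_onI)
    fix x y assume xX: "x \<in> X" and yX: "y \<in> X" and eq: "G x = G y"
    obtain a b c where abc: "G x = ((a,b),c)" by (metis prod.collapse)
    have hx: "a mod p \<noteq> 0" "(a * x + b) mod p = c mod p" using Gspec[OF xX abc] by auto
    have hy: "(a * y + b) mod p = c mod p" using Gspec[OF yX] abc eq by auto
    show "x = y" using aff_inj[OF pr hx(1), of x y b] xX yX XS Ssub hx(2) hy by auto
  qed
  define P where "P = G ` X"
  have cP: "card P = card X" unfolding P_def using injG by (simp add: card_image)
  have PLC: "P \<subseteq> L \<times> C"
  proof
    fix q assume "q \<in> P"
    then obtain x where "x \<in> X" "q = G x" unfolding P_def by auto
    then show "q \<in> L \<times> C" using G[of x] by (metis mem_Times_iff)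
  qed
  have N0: "0 < \<alpha> * real (card S)" using assms(2) cS by simp
  have NK: "\<alpha> * real (card S) \<le> real (card P)" using big cP unfolding X_def by simp
  have Pne: "P \<noteq> {}" using N0 NK by auto
  have two: "card {c\<in>C. (l,c)\<in>P \<and> (l',c)\<in>P} \<le> 2"
    if lL: "l \<in> L" and l'L: "l' \<in> L" and ll: "l \<noteq> l'" for l l'
  proof (rule ccontr)
    assume "\<not> ?thesis"
    then have "3 \<le> card {c\<in>C. (l,c)\<in>P \<and> (l',c)\<in>P}" by simp
    then obtain c1 c2 c3 where cs: "c1 \<in> {c\<in>C. (l,c)\<in>P \<and> (l',c)\<in>P}"
        "c2 \<in> {c\<in>C. (l,c)\<in>P \<and> (l',c)\<in>P}" "c3 \<in> {c\<in>C. (l,c)\<in>P \<and> (l',c)\<in>P}"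
        and d: "c1 \<noteq> c2" "c1 \<noteq> c3" "c2 \<noteq> c3"
      using three_elems[OF \<open>3 \<le> _\<close>] by (elim exE conjE)
    obtain a b where l: "l = (a,b)" by (cases l)
    obtain a' b' where l': "l' = (a',b')" by (cases l')
    have "(l, c1) \<in> G ` X" using cs(1) unfolding P_def by simp
    then obtain x1 where x1: "x1 \<in> X" "G x1 = (l, c1)" by (metis imageE)
    have "(l, c2) \<in> G ` X" using cs(2) unfolding P_def by simp
    then obtain x2 where x2: "x2 \<in> X" "G x2 = (l, c2)" by (metis imageE)
    have "(l, c3) \<in> G ` X" using cs(3) unfolding P_def by simp
    then obtain x3 where x3: "x3 \<in> X" "G x3 = (l, c3)" by (metis imageE)
    have "(l', c1) \<in> G ` X" using cs(1) unfolding P_def by simp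
    then obtain y1 where y1: "y1 \<in> X" "G y1 = (l', c1)" by (metis imageE)
    have "(l', c2) \<in> G ` X" using cs(2) unfolding P_def by simp
    then obtain y2 where y2: "y2 \<in> X" "G y2 = (l', c2)" by (metis imageE)
    have "(l', c3) \<in> G ` X" using cs(3) unfolding P_def by simp
    then obtain y3 where y3: "y3 \<in> X" "G y3 = (l', c3)" by (metis imageE)
    note hx1 = Gspec[OF x1(1) x1(2)[unfolded l]]
    note hx2 = Gspec[OF x2(1) x2(2)[unfolded l]]
    note hx3 = Gspec[OF x3(1) x3(2)[unfolded l]]
    note hy1 = Gspec[OF y1(1) y1(2)[unfolded l']]
    note hy2 = Gspec[OF y2(1) y2(2)[unfolded l']]
    note hy3 = Gspec[OF y3(1) y3(2)[unfolded l']]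
    have "((x1 - x2) * (y2 - y3) - (y1 - y2) * (x2 - x3)) mod p = 0"
      by (rule key_det[OF pr hx1[THEN conjunct1] hy1[THEN conjunct1]
         hx1[THEN conjunct2, THEN conjunct1] hx2[THEN conjunct2, THEN conjunct1]
         hx3[THEN conjunct2, THEN conjunct1] hy1[THEN conjunct2, THEN conjunct1]
         hy2[THEN conjunct2, THEN conjunct1] hy3[THEN conjunct2, THEN conjunct1]])
    moreover have dist: "distinct [x1, y1, x2, y2, x3, y3]"
    proof -
      have "distinct (map G [x1, y1, x2, y2, x3, y3])"
        using d ll by (simp add: x1(2) x2(2) x3(2) y1(2) y2(2) y3(2))
      then show ?thesis by (simp only: distinct_map)
    qed
    moreover have sub: "{x1, y1, x2, y2, x3, y3} \<subseteq> S"
      using x1 x2 x3 y1 y2 y3 XS by auto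
    ultimately show False using det[OF dist sub] by simp
  qed
  have "real (card P) ^ 2 < 3 * real m ^ 3"
    using count_bound[OF fL fC PLC cL[folded m_def] cC[folded m_def] Pne two] by simp
  then have "(\<alpha> * real (card S) / sqrt 3) powr (2/3) < real m"
    using final_real[OF N0 NK] by simp
  then show ?thesis unfolding m_def by simp
qed

end
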